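(* Let $f,g\in\mathbb{Q}[x]$ with $f\neq0$, let $d=\gcd(f,g)$, and assume $\gcd(f/d,d)=1$ and that $g(\xi)\ge0$ at every real root $\xi$ of $f$. Then there exists $b\in\mathbb{Q}[x]$ such that $b$ is relatively prime to $f/d$, $b(\xi)>0$ at every real root $\xi$ of $f/d$, and $b\,d^2\equiv g\pmod f$. *)

theory Defs
  imports "HOL-Computational_Algebra.Computational_Algebra" "HOL-Computational_Algebra.Field_as_Ring"
begin

definition real_roots :: "rat poly \<Rightarrow> real set" where
  "real_roots p = {\<xi>::real. poly (map_poly of_rat p) \<xi> = 0}"

definition rpoly :: "rat poly \<Rightarrow> real \<Rightarrow> real" where
  "rpoly p \<xi> = poly (map_poly of_rat p) \<xi>"

end

theory Submission
  imports Defs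
begin

lemma mp_add: "map_poly (of_rat::rat\<Rightarrow>real) (p+q) = map_poly of_rat p + map_poly of_rat q"
  by (rule poly_eqI) (simp add: coeff_map_poly of_rat_add)
lemma mp_smult: "map_poly (of_rat::rat\<Rightarrow>real) (smult a q) = smult (of_rat a) (map_poly of_rat q)"
  by (rule poly_eqI) (simp add: coeff_map_poly of_rat_mult)
lemma mp_mult: "map_poly (of_rat::rat\<Rightarrow>real) (p*q) = map_poly of_rat p * map_poly of_rat q"
  by (induction p) (simp_all add: mp_add mp_smult map_poly_pCons)
lemma rp_mult: "rpoly (p*q) x = rpoly p x * rpoly q x" by (simp add: rpoly_def mp_mult)
lemma rp_add: "rpoly (p+q) x = rpoly p x + rpoly q x" by (simp add: rpoly_def mp_add)
lemma rp_1: "rpoly 1 x = 1" by (simp add: rpoly_def)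
lemma bez: "coprime (a::rat poly) b \<Longrightarrow> \<exists>u v. u*a + v*b = 1"
  by (metis bezout_coefficients_fst_snd coprime_imp_gcd_eq_1)
lemma bez2: "u*a + v*(b::rat poly) = 1 \<Longrightarrow> coprime a b"
  by (metis coprimeI dvd_add dvd_mult)

theorem mainTheorem9:
  fixes f g :: "rat poly"
  assumes "f \<noteq> 0"
    and "coprime (f div gcd f g) (gcd f g)"
    and "\<forall>\<xi>\<in>real_roots f. rpoly g \<xi> \<ge> 0"
  shows "\<exists>b :: rat poly. coprime b (f div gcd f g)
           \<and> (\<forall>\<xi>\<in>real_roots (f div gcd f g). rpoly b \<xi> > 0)
           \<and> f dvd (b * (gcd f g)^2 - g)"
proof -
  define d where "d = gcd f g"
  define h where "h = f div d"
  define g' where "g' = g div d"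
  have d0: "d \<noteq> 0" using assms(1) by (simp add: d_def)
  have fh: "f = h * d" unfolding h_def d_def by simp
  have gg: "g = g' * d" unfolding g'_def d_def by simp
  have nd: "normalize d = d" by (simp add: d_def)
  have "d = gcd (d*h) (d*g')" using fh gg d_def by (metis mult.commute)
  then have "d = normalize (d * gcd h g')" by (simp only: gcd_mult_left)
  also have "\<dots> = d * gcd h g'" using nd by (simp add: normalize_mult)
  finally have "gcd h g' = 1" using d0 by simp
  then have chg: "coprime h g'" by (simp add: coprime_iff_gcd_eq_1)
  have chd: "coprime h d" using assms(2) by (simp add: h_def d_def)
  obtain u e where ue: "u*h + e*d = 1" using bez[OF chd] by blast
  obtain s t where st: "s*h + t*g' = 1" using bez[OF chg] by blast
  have ce: "coprime e h" using bez2[of u h e d] ue bez2[of d e u h]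
    by (metis add.commute mult.commute)
  have cg: "coprime g' h" using chg by (simp add: coprime_commute)
  define b where "b = e * g'"
  have cb: "coprime b h" unfolding b_def using ce cg by simp
  have pos: "rpoly b x > 0" if x: "x \<in> real_roots h" for x
  proof -
    have h0: "rpoly h x = 0" using x by (simp add: real_roots_def rpoly_def)
    have "rpoly f x = 0" using h0 fh by (simp add: rp_mult)
    then have "x \<in> real_roots f" by (simp add: real_roots_def rpoly_def)
    then have g0: "rpoly g' x * rpoly d x \<ge> 0" using assms(3) gg by (simp add: rp_mult)
    have ed: "rpoly e x * rpoly d x = 1"
      using arg_cong[OF ue, of "\<lambda>p. rpoly p x"] h0 by (simp add: rp_mult rp_add rp_1)
    have tg: "rpoly t x * rpoly g' x = 1"
      using arg_cong[OF st, of "\<lambda>p. rpoly p x"] h0 by (simp add: rp_mult rp_add rp_1)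
    have "rpoly b x = rpoly e x * rpoly e x * (rpoly g' x * rpoly d x)"
      using ed by (simp add: b_def rp_mult algebra_simps)
    moreover have "rpoly e x \<noteq> 0" "rpoly g' x \<noteq> 0" "rpoly d x \<noteq> 0" using ed tg by auto
    ultimately show ?thesis using g0
      by (metis mult_pos_pos not_real_square_gt_zero order_le_neq_trans mult_eq_0_iff)
  qed
  have "b * d^2 - g = (- (g' * u)) * (h * d)"
  proof -
    have "e * d = 1 - u * h" using ue by (simp add: algebra_simps)
    then have "b * d^2 - g = g' * d * (e*d - 1)" by (simp add: b_def gg power2_eq_square algebra_simps)
    also have "e*d - 1 = - (u*h)" using ue by (simp add: algebra_simps)
    finally show ?thesis by (simp add: algebra_simps)
  qed
  then have "f dvd (b * d^2 - g)" using fh by simp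
  then show ?thesis using cb pos unfolding d_def h_def by (auto simp: coprime_commute)
qed

end
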